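(* Let $\mathcal G$ be an étale groupoid and $X$ a right $\mathcal G$-space with basic action, and $p\colon X\to X/\mathcal G$ the orbit projection. Then $X\times_{p,X/\mathcal G,p}X=\{(x_1,x_2)\in X\times X:p(x_1)=p(x_2)\}$ is closed in $X\times X$ if and only if $X/\mathcal G$ is Hausdorff.
   Context: An étale groupoid: topologies on arrow space $\mathcal G$ and object space $\mathcal G^0\subseteq\mathcal G$ with $r,s$ local homeomorphisms, multiplication and inversion continuous. A right $\mathcal G$-space: space $X$, continuous anchor $s\colon X\to\mathcal G^0$, continuous action $X\times_{s,\mathcal G^0,r}\mathcal G\to X$ with $s(xg)=s(g)$, $(xg_1)g_2=x(g_1g_2)$, $x\,s(x)=x$. $X/\mathcal G$ carries the quotient topology. The action is basic if $(x,g)\mapsto(xg,x)$, $X\times_{s,\mathcal G^0,r}\mathcal G\to X\times X$, is a homeomorphism onto its image with the subspace topology. *)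

theory Defs
  imports "HOL-Analysis.Analysis"
begin

definition local_homeomorphism :: "'a topology \<Rightarrow> 'b topology \<Rightarrow> ('a \<Rightarrow> 'b) \<Rightarrow> bool" where
  "local_homeomorphism T S f \<longleftrightarrow>
     continuous_map T S f \<and>
     (\<forall>x \<in> topspace T. \<exists>U. openin T U \<and> x \<in> U \<and> openin S (f ` U) \<and>
        homeomorphic_map (subtopology T U) (subtopology S (f ` U)) f)"

text \<open>Etale groupoid: arrow space TG (with carrier topspace TG), object space G0
  (a subset of the arrows, with the subspace topology), range r, source s,
  multiplication mul (defined on composable pairs, s g = r h) and inversion gi.\<close>
definition etale_groupoid ::
  "'g topology \<Rightarrow> 'g set \<Rightarrow> ('g \<Rightarrow> 'g) \<Rightarrow> ('g \<Rightarrow> 'g) \<Rightarrow> ('g \<Rightarrow> 'g \<Rightarrow> 'g) \<Rightarrow> ('g \<Rightarrow> 'g) \<Rightarrow> bool" where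
  "etale_groupoid TG G0 r s mul gi \<longleftrightarrow>
     G0 \<subseteq> topspace TG \<and>
     (\<forall>g \<in> topspace TG. r g \<in> G0 \<and> s g \<in> G0) \<and>
     (\<forall>u \<in> G0. r u = u \<and> s u = u) \<and>
     (\<forall>g \<in> topspace TG. \<forall>h \<in> topspace TG. s g = r h \<longrightarrow>
        mul g h \<in> topspace TG \<and> r (mul g h) = r g \<and> s (mul g h) = s h) \<and>
     (\<forall>g \<in> topspace TG. \<forall>h \<in> topspace TG. \<forall>k \<in> topspace TG.
        s g = r h \<longrightarrow> s h = r k \<longrightarrow> mul (mul g h) k = mul g (mul h k)) \<and>
     (\<forall>g \<in> topspace TG. mul (r g) g = g \<and> mul g (s g) = g) \<and>
     (\<forall>g \<in> topspace TG. gi g \<in> topspace TG \<and> r (gi g) = s g \<and> s (gi g) = r g \<and>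
        mul g (gi g) = r g \<and> mul (gi g) g = s g) \<and>
     local_homeomorphism TG (subtopology TG G0) r \<and>
     local_homeomorphism TG (subtopology TG G0) s \<and>
     continuous_map
       (subtopology (prod_topology TG TG) {(g, h). g \<in> topspace TG \<and> h \<in> topspace TG \<and> s g = r h})
       TG (\<lambda>(g, h). mul g h) \<and>
     continuous_map TG TG gi"

definition action_domain ::
  "'x topology \<Rightarrow> ('x \<Rightarrow> 'g) \<Rightarrow> 'g topology \<Rightarrow> ('g \<Rightarrow> 'g) \<Rightarrow> ('x \<times> 'g) set" where
  "action_domain TX sX TG r = {(x, g). x \<in> topspace TX \<and> g \<in> topspace TG \<and> sX x = r g}"

definition right_G_space ::
  "'g topology \<Rightarrow> 'g set \<Rightarrow> ('g \<Rightarrow> 'g) \<Rightarrow> ('g \<Rightarrow> 'g) \<Rightarrow> ('g \<Rightarrow> 'g \<Rightarrow> 'g) \<Rightarrow>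
   'x topology \<Rightarrow> ('x \<Rightarrow> 'g) \<Rightarrow> ('x \<Rightarrow> 'g \<Rightarrow> 'x) \<Rightarrow> bool" where
  "right_G_space TG G0 r s mul TX sX act \<longleftrightarrow>
     continuous_map TX (subtopology TG G0) sX \<and>
     continuous_map (subtopology (prod_topology TX TG) (action_domain TX sX TG r)) TX
       (\<lambda>(x, g). act x g) \<and>
     (\<forall>(x, g) \<in> action_domain TX sX TG r. act x g \<in> topspace TX \<and> sX (act x g) = s g) \<and>
     (\<forall>x \<in> topspace TX. \<forall>g1 \<in> topspace TG. \<forall>g2 \<in> topspace TG.
        sX x = r g1 \<longrightarrow> s g1 = r g2 \<longrightarrow> act (act x g1) g2 = act x (mul g1 g2)) \<and>
     (\<forall>x \<in> topspace TX. act x (sX x) = x)"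

definition basic_action ::
  "'g topology \<Rightarrow> ('g \<Rightarrow> 'g) \<Rightarrow> 'x topology \<Rightarrow> ('x \<Rightarrow> 'g) \<Rightarrow> ('x \<Rightarrow> 'g \<Rightarrow> 'x) \<Rightarrow> bool" where
  "basic_action TG r TX sX act \<longleftrightarrow>
     homeomorphic_map
       (subtopology (prod_topology TX TG) (action_domain TX sX TG r))
       (subtopology (prod_topology TX TX) ((\<lambda>(x, g). (act x g, x)) ` action_domain TX sX TG r))
       (\<lambda>(x, g). (act x g, x))"

text \<open>Orbit projection p : X \<rightarrow> X/G, an orbit being represented as a set.\<close>
definition orbit :: "'g topology \<Rightarrow> ('g \<Rightarrow> 'g) \<Rightarrow> ('x \<Rightarrow> 'g) \<Rightarrow> ('x \<Rightarrow> 'g \<Rightarrow> 'x) \<Rightarrow> 'x \<Rightarrow> 'x set" where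
  "orbit TG r sX act x = {act x g | g. g \<in> topspace TG \<and> r g = sX x}"

definition orbit_space ::
  "'g topology \<Rightarrow> ('g \<Rightarrow> 'g) \<Rightarrow> 'x topology \<Rightarrow> ('x \<Rightarrow> 'g) \<Rightarrow> ('x \<Rightarrow> 'g \<Rightarrow> 'x) \<Rightarrow> 'x set topology" where
  "orbit_space TG r TX sX act = topology (\<lambda>U. U \<subseteq> orbit TG r sX act ` topspace TX \<and>
      openin TX {x \<in> topspace TX. orbit TG r sX act x \<in> U})"

lemma istopology_orbit_space:
  "istopology (\<lambda>U. U \<subseteq> orbit TG r sX act ` topspace TX \<and>
      openin TX {x \<in> topspace TX. orbit TG r sX act x \<in> U})"
proof -
  let ?p = "orbit TG r sX act"
  have 1: "openin TX {x \<in> topspace TX. ?p x \<in> S \<inter> T}"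
    if "openin TX {x \<in> topspace TX. ?p x \<in> S}" "openin TX {x \<in> topspace TX. ?p x \<in> T}" for S T
  proof -
    have "{x \<in> topspace TX. ?p x \<in> S \<inter> T} = {x \<in> topspace TX. ?p x \<in> S} \<inter> {x \<in> topspace TX. ?p x \<in> T}" by auto
    then show ?thesis using that by auto
  qed
  have 2: "openin TX {x \<in> topspace TX. ?p x \<in> \<Union>K}"
    if "\<forall>S\<in>K. openin TX {x \<in> topspace TX. ?p x \<in> S}" for K
  proof -
    have "{x \<in> topspace TX. ?p x \<in> \<Union>K} = (\<Union>S\<in>K. {x \<in> topspace TX. ?p x \<in> S})" by auto
    then show ?thesis using that by auto
  qed
  show ?thesis unfolding istopology_def using 1 2 by blast
qed

end

theory Submission
  imports Defs
begin

lemma open_quotient_Hausdorff: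
  fixes TX :: "'x topology" and Y :: "'y topology" and q :: "'x \<Rightarrow> 'y"
  assumes top: "topspace Y = q ` topspace TX"
    and opn: "\<And>V. openin Y V \<longleftrightarrow> V \<subseteq> topspace Y \<and> openin TX {x \<in> topspace TX. q x \<in> V}"
    and omap: "\<And>U. openin TX U \<Longrightarrow> openin Y (q ` U)"
  shows "closedin (prod_topology TX TX)
           {(x1, x2). x1 \<in> topspace TX \<and> x2 \<in> topspace TX \<and> q x1 = q x2}
         \<longleftrightarrow> Hausdorff_space Y"
proof
  let ?R = "{(x1, x2). x1 \<in> topspace TX \<and> x2 \<in> topspace TX \<and> q x1 = q x2}"
  assume c: "closedin (prod_topology TX TX) ?R"
  then have o: "openin (prod_topology TX TX) (topspace (prod_topology TX TX) - ?R)"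
    by (simp add: closedin_def)
  show "Hausdorff_space Y"
    unfolding Hausdorff_space_def
  proof (intro allI impI)
    fix a b assume ab: "a \<in> topspace Y \<and> b \<in> topspace Y \<and> a \<noteq> b"
    then obtain x1 x2 where x: "x1 \<in> topspace TX" "x2 \<in> topspace TX" "a = q x1" "b = q x2"
      using top by auto
    have mem: "(x1, x2) \<in> topspace (prod_topology TX TX) - ?R" using ab x by auto
    have "\<exists>U V. openin TX U \<and> openin TX V \<and> x1 \<in> U \<and> x2 \<in> V \<and>
        U \<times> V \<subseteq> topspace (prod_topology TX TX) - ?R"
      by (rule o[unfolded openin_prod_topology_alt, rule_format, OF mem])
    then obtain U1 U2 where U: "openin TX U1" "openin TX U2" "x1 \<in> U1" "x2 \<in> U2"
      "U1 \<times> U2 \<subseteq> topspace (prod_topology TX TX) - ?R"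
      by (elim exE conjE)
    have "disjnt (q ` U1) (q ` U2)"
      unfolding disjnt_def
    proof (rule equals0I)
      fix z assume "z \<in> q ` U1 \<inter> q ` U2"
      then obtain u1 u2 where uu: "u1 \<in> U1" "u2 \<in> U2" "q u1 = q u2" by auto
      have uu2: "(u1, u2) \<in> U1 \<times> U2" using uu by simp
      have "(u1, u2) \<in> topspace (prod_topology TX TX) - ?R" by (rule subsetD[OF U(5) uu2])
      then show False using uu(3) by auto
    qed
    then show "\<exists>U V. openin Y U \<and> openin Y V \<and> a \<in> U \<and> b \<in> V \<and> disjnt U V"
    proof (intro exI conjI)
      show "openin Y (q ` U1)" "openin Y (q ` U2)" using U(1,2) by (auto intro: omap)
      show "a \<in> q ` U1" using x(3) U(3) by simp
      show "b \<in> q ` U2" using x(4) U(4) by simp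
    qed simp
  qed
next
  let ?R = "{(x1, x2). x1 \<in> topspace TX \<and> x2 \<in> topspace TX \<and> q x1 = q x2}"
  assume H: "Hausdorff_space Y"
  have "openin (prod_topology TX TX) (topspace (prod_topology TX TX) - ?R)"
    unfolding openin_prod_topology_alt
  proof (intro allI impI)
    fix x1 x2 assume xx: "(x1, x2) \<in> topspace (prod_topology TX TX) - ?R"
    then have x: "x1 \<in> topspace TX" "x2 \<in> topspace TX" "q x1 \<noteq> q x2" by auto
    have qx: "q x1 \<in> topspace Y" "q x2 \<in> topspace Y" using x top by auto
    have "\<exists>U V. openin Y U \<and> openin Y V \<and> q x1 \<in> U \<and> q x2 \<in> V \<and> disjnt U V"
      by (rule H[unfolded Hausdorff_space_def, rule_format]) (intro conjI qx x(3))
    then obtain V1 V2 where V: "openin Y V1" "openin Y V2" "q x1 \<in> V1" "q x2 \<in> V2" "disjnt V1 V2"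
      by (elim exE conjE)
    define U1 where "U1 = {x \<in> topspace TX. q x \<in> V1}"
    define U2 where "U2 = {x \<in> topspace TX. q x \<in> V2}"
    have o1: "openin TX U1" using opn[of V1] V(1) unfolding U1_def by blast
    have o2: "openin TX U2" using opn[of V2] V(2) unfolding U2_def by blast
    have sub: "U1 \<times> U2 \<subseteq> topspace (prod_topology TX TX) - ?R"
    proof (rule subsetI)
      fix z assume zU: "z \<in> U1 \<times> U2"
      obtain z1 z2 where zz: "z = (z1, z2)" "z1 \<in> U1" "z2 \<in> U2"
        using zU by (cases z) simp
      have z: "z = (z1, z2)" "z1 \<in> topspace TX" "q z1 \<in> V1" "z2 \<in> topspace TX" "q z2 \<in> V2"
        using zz by (simp_all add: U1_def U2_def)
      have "q z1 \<noteq> q z2"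
      proof
        assume "q z1 = q z2"
        then have "q z1 \<in> V1 \<inter> V2" using z(3,5) by simp
        then show False using V(5) unfolding disjnt_def by (simp only: Int_iff empty_iff)
      qed
      then show "z \<in> topspace (prod_topology TX TX) - ?R" using z by simp
    qed
    show "\<exists>U V. openin TX U \<and> openin TX V \<and> x1 \<in> U \<and> x2 \<in> V \<and>
        U \<times> V \<subseteq> topspace (prod_topology TX TX) - ?R"
    proof (intro exI conjI)
      show "openin TX U1" by (rule o1)
      show "openin TX U2" by (rule o2)
      show "U1 \<times> U2 \<subseteq> topspace (prod_topology TX TX) - ?R" by (rule sub)
      show "x1 \<in> U1" using x(1) V(3) U1_def by simp
      show "x2 \<in> U2" using x(2) V(4) U2_def by simp
    qed
  qed
  moreover have "?R \<subseteq> topspace (prod_topology TX TX)" by auto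
  ultimately show "closedin (prod_topology TX TX) ?R" by (simp add: closedin_def)
qed

lemma openin_orbit_space:
  "openin (orbit_space TG r TX sX act) U \<longleftrightarrow> U \<subseteq> orbit TG r sX act ` topspace TX \<and>
      openin TX {x \<in> topspace TX. orbit TG r sX act x \<in> U}"
  unfolding orbit_space_def topology_inverse'[OF istopology_orbit_space] by (rule refl)

lemma topspace_orbit_space:
  "topspace (orbit_space TG r TX sX act) = orbit TG r sX act ` topspace TX"
proof -
  have e: "{x \<in> topspace TX. orbit TG r sX act x \<in> orbit TG r sX act ` topspace TX} = topspace TX"
    by auto
  have "openin (orbit_space TG r TX sX act) (orbit TG r sX act ` topspace TX)"
    unfolding openin_orbit_space e by simp
  then have 1: "orbit TG r sX act ` topspace TX \<subseteq> topspace (orbit_space TG r TX sX act)"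
    by (rule openin_subset)
  have 2: "topspace (orbit_space TG r TX sX act) \<subseteq> orbit TG r sX act ` topspace TX"
    using openin_topspace[of "orbit_space TG r TX sX act"] unfolding openin_orbit_space by blast
  show ?thesis using 1 2 by blast
qed

lemma etale_facts:
  assumes "etale_groupoid TG G0 r s mul gi"
  shows etG0: "G0 \<subseteq> topspace TG"
   and etrs: "\<And>g. g \<in> topspace TG \<Longrightarrow> r g \<in> G0 \<and> s g \<in> G0"
   and etunit0: "\<And>u. u \<in> G0 \<Longrightarrow> r u = u \<and> s u = u"
   and etmul: "\<And>g h. g \<in> topspace TG \<Longrightarrow> h \<in> topspace TG \<Longrightarrow> s g = r h \<Longrightarrow>
        mul g h \<in> topspace TG \<and> r (mul g h) = r g \<and> s (mul g h) = s h"
   and etassoc: "\<And>g h k. g \<in> topspace TG \<Longrightarrow> h \<in> topspace TG \<Longrightarrow> k \<in> topspace TG \<Longrightarrow>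
        s g = r h \<Longrightarrow> s h = r k \<Longrightarrow> mul (mul g h) k = mul g (mul h k)"
   and etunit: "\<And>g. g \<in> topspace TG \<Longrightarrow> mul (r g) g = g \<and> mul g (s g) = g"
   and etinv: "\<And>g. g \<in> topspace TG \<Longrightarrow> gi g \<in> topspace TG \<and> r (gi g) = s g \<and> s (gi g) = r g \<and>
        mul g (gi g) = r g \<and> mul (gi g) g = s g"
   and etr: "local_homeomorphism TG (subtopology TG G0) r"
  using assms unfolding etale_groupoid_def by blast+

lemma G_space_facts:
  assumes "right_G_space TG G0 r s mul TX sX act"
  shows gss: "continuous_map TX (subtopology TG G0) sX"
   and gsact: "continuous_map (subtopology (prod_topology TX TG) (action_domain TX sX TG r)) TX
       (\<lambda>(x, g). act x g)"
   and gsdom: "\<And>x g. (x, g) \<in> action_domain TX sX TG r \<Longrightarrow> act x g \<in> topspace TX \<and> sX (act x g) = s g"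
   and gsassoc: "\<And>x g1 g2. x \<in> topspace TX \<Longrightarrow> g1 \<in> topspace TG \<Longrightarrow> g2 \<in> topspace TG \<Longrightarrow>
        sX x = r g1 \<Longrightarrow> s g1 = r g2 \<Longrightarrow> act (act x g1) g2 = act x (mul g1 g2)"
   and gsunit: "\<And>x. x \<in> topspace TX \<Longrightarrow> act x (sX x) = x"
  using assms unfolding right_G_space_def by blast+
lemma orbit_act:
  assumes G: "etale_groupoid TG G0 r s mul gi"
    and X: "right_G_space TG G0 r s mul TX sX act"
    and x: "x \<in> topspace TX" and h: "h \<in> topspace TG" and xh: "sX x = r h"
  shows "orbit TG r sX act (act x h) = orbit TG r sX act x"
proof -
  have dom: "(x, h) \<in> action_domain TX sX TG r" using x h xh by (simp add: action_domain_def)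
  have v: "act x h \<in> topspace TX" "sX (act x h) = s h"
    using gsdom[OF X dom] by auto
  note assoc = gsassoc[OF X] and Gmul = etmul[OF G] and Gassoc = etassoc[OF G]
  have Gunit: "\<And>g. g \<in> topspace TG \<Longrightarrow> mul (r g) g = g" using etunit[OF G] by blast
  note Ginv = etinv[OF G]
  show ?thesis
  proof (rule equalityI; rule subsetI)
    fix z assume "z \<in> orbit TG r sX act (act x h)"
    then obtain g where g: "g \<in> topspace TG" "r g = sX (act x h)" "z = act (act x h) g"
      unfolding orbit_def by blast
    have "z = act x (mul h g)" using assoc[OF x h g(1) xh] g v by simp
    moreover have "mul h g \<in> topspace TG" "r (mul h g) = sX x"
      using Gmul[OF h g(1)] g v xh by auto
    ultimately show "z \<in> orbit TG r sX act x" unfolding orbit_def by blast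
  next
    fix z assume "z \<in> orbit TG r sX act x"
    then obtain g where g: "g \<in> topspace TG" "r g = sX x" "z = act x g"
      unfolding orbit_def by blast
    have i: "gi h \<in> topspace TG" "r (gi h) = s h" "s (gi h) = r h" "mul h (gi h) = r h"
      using Ginv[OF h] by auto
    have m: "mul (gi h) g \<in> topspace TG" "r (mul (gi h) g) = r (gi h)"
      using Gmul[OF i(1) g(1)] i g xh by auto
    have "act (act x h) (mul (gi h) g) = act x (mul h (mul (gi h) g))"
      using assoc[OF x h m(1) xh] m i by simp
    also have "mul h (mul (gi h) g) = mul (mul h (gi h)) g"
      using Gassoc[OF h i(1) g(1)] i g xh by simp
    also have "\<dots> = g" using i(4) Gunit[OF g(1)] g xh by simp
    finally have "z = act (act x h) (mul (gi h) g)" using g by simp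
    then show "z \<in> orbit TG r sX act (act x h)"
      unfolding orbit_def using m i v by auto
  qed
qed

lemma orbit_self:
  assumes G: "etale_groupoid TG G0 r s mul gi"
    and X: "right_G_space TG G0 r s mul TX sX act"
    and x: "x \<in> topspace TX"
  shows "x \<in> orbit TG r sX act x"
proof -
  have "sX x \<in> G0" using gss[OF X] x by (auto simp: continuous_map_def Pi_iff)
  then have "sX x \<in> topspace TG" "r (sX x) = sX x" using etG0[OF G] etunit0[OF G] by auto
  moreover have "act x (sX x) = x" using gsunit[OF X x] .
  ultimately show ?thesis unfolding orbit_def by force
qed

lemma orbit_open_map:
  assumes G: "etale_groupoid TG G0 r s mul gi"
    and X: "right_G_space TG G0 r s mul TX sX act"
    and U: "openin TX U"
  shows "openin TX {x \<in> topspace TX. orbit TG r sX act x \<in> orbit TG r sX act ` U}"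
proof (subst openin_subopen, intro ballI)
  let ?p = "orbit TG r sX act"
  fix x assume "x \<in> {x \<in> topspace TX. ?p x \<in> ?p ` U}"
  then obtain u where x: "x \<in> topspace TX" and u: "u \<in> U" "?p x = ?p u" by blast
  have uX: "u \<in> topspace TX" using U u openin_subset by blast
  have "x \<in> ?p u" using orbit_self[OF G X x] u by simp
  then obtain g where g: "g \<in> topspace TG" "r g = sX u" "x = act u g"
    unfolding orbit_def by blast
  have domug: "(u, g) \<in> action_domain TX sX TG r" using uX g by (simp add: action_domain_def)
  have sXx: "sX x = s g" using gsdom[OF X domug] g by simp
  define k where "k = gi g"
  have k: "k \<in> topspace TG" "r k = s g" "s k = r g" "mul g k = r g"
    using etinv[OF G g(1)] k_def by auto
  obtain K where K: "openin TG K" "k \<in> K" "openin (subtopology TG G0) (r ` K)"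
     "homeomorphic_map (subtopology TG K) (subtopology (subtopology TG G0) (r ` K)) r"
    using etr[OF G] k(1) unfolding local_homeomorphism_def by blast
  obtain \<sigma> where \<sigma>: "homeomorphic_maps (subtopology TG K) (subtopology (subtopology TG G0) (r ` K)) r \<sigma>"
    using K(4) homeomorphic_map_maps by blast
  have KT: "K \<subseteq> topspace TG" using K(1) openin_subset by blast
  have rKT: "r ` K \<subseteq> topspace TG \<inter> G0" using K(3) openin_subset by force
  have \<sigma>c: "continuous_map (subtopology (subtopology TG G0) (r ` K)) (subtopology TG K) \<sigma>"
    using \<sigma> unfolding homeomorphic_maps_def by blast
  have \<sigma>r: "\<And>z. z \<in> K \<Longrightarrow> \<sigma> (r z) = z"
    using \<sigma> KT unfolding homeomorphic_maps_def by auto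
  have \<sigma>K: "\<And>y. y \<in> r ` K \<Longrightarrow> \<sigma> y \<in> K \<and> r (\<sigma> y) = y"
    using \<sigma>r by auto
  define A where "A = {y \<in> topspace TX. sX y \<in> r ` K}"
  have Aopen: "openin TX A" unfolding A_def
    by (rule openin_continuous_map_preimage[OF gss[OF X] K(3)])
  have c1: "continuous_map (subtopology TX A) (subtopology (subtopology TG G0) (r ` K)) sX"
    unfolding continuous_map_in_subtopology
    using continuous_map_from_subtopology[OF gss[OF X]] gss[OF X]
    by (auto simp: A_def Pi_iff continuous_map_in_subtopology)
  have c2: "continuous_map (subtopology TX A) TG (\<lambda>y. \<sigma> (sX y))"
    using continuous_map_compose[OF c1 \<sigma>c] unfolding continuous_map_in_subtopology o_def by blast
  have c3: "continuous_map (subtopology TX A) (prod_topology TX TG) (\<lambda>y. (y, \<sigma> (sX y)))"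
    by (intro continuous_map_pairedI c2 continuous_map_from_subtopology continuous_map_id[unfolded id_def])
  have c4: "continuous_map (subtopology TX A) (subtopology (prod_topology TX TG) (action_domain TX sX TG r))
     (\<lambda>y. (y, \<sigma> (sX y)))"
    unfolding continuous_map_in_subtopology
    using c3 \<sigma>K KT by (auto simp: A_def action_domain_def Pi_iff)
  have c5: "continuous_map (subtopology TX A) TX (\<lambda>y. act y (\<sigma> (sX y)))"
    using continuous_map_compose[OF c4 gsact[OF X]] by (simp add: o_def)
  define W where "W = {y \<in> topspace (subtopology TX A). act y (\<sigma> (sX y)) \<in> U}"
  have "openin (subtopology TX A) W"
    unfolding W_def by (rule openin_continuous_map_preimage[OF c5 U])
  then have Wopen: "openin TX W" using Aopen openin_trans_full by blast
  have xA: "x \<in> A" using x sXx k K(2) A_def by force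
  have "\<sigma> (sX x) = k" using \<sigma>r[OF K(2)] sXx k by simp
  moreover have "act x k = u"
  proof -
    have "act x k = act u (mul g k)" using gsassoc[OF X uX g(1) k(1)] g k by simp
    also have "\<dots> = u" using k(4) g(2) gsunit[OF X uX] by simp
    finally show ?thesis .
  qed
  ultimately have xW: "x \<in> W" using xA x u(1) W_def by simp
  have "W \<subseteq> {x \<in> topspace TX. ?p x \<in> ?p ` U}"
  proof
    fix y assume "y \<in> W"
    then have y: "y \<in> topspace TX" "sX y \<in> r ` K" "act y (\<sigma> (sX y)) \<in> U"
      unfolding W_def A_def by auto
    have h: "\<sigma> (sX y) \<in> topspace TG" "sX y = r (\<sigma> (sX y))" using \<sigma>K[OF y(2)] KT by auto
    have "?p (act y (\<sigma> (sX y))) = ?p y" by (rule orbit_act[OF G X y(1) h])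
    then have "?p y \<in> ?p ` U" using y(3) by (metis image_eqI)
    then show "y \<in> {x \<in> topspace TX. ?p x \<in> ?p ` U}" using y(1) by simp
  qed
  then show "\<exists>T. openin TX T \<and> x \<in> T \<and> T \<subseteq> {x \<in> topspace TX. ?p x \<in> ?p ` U}"
    using Wopen xW by blast
qed

theorem lemma2p13:
  fixes TG :: "'g topology" and G0 :: "'g set" and r s :: "'g \<Rightarrow> 'g"
    and mul :: "'g \<Rightarrow> 'g \<Rightarrow> 'g" and gi :: "'g \<Rightarrow> 'g"
    and TX :: "'x topology" and sX :: "'x \<Rightarrow> 'g" and act :: "'x \<Rightarrow> 'g \<Rightarrow> 'x"
  assumes "etale_groupoid TG G0 r s mul gi"
    and "right_G_space TG G0 r s mul TX sX act"
    and "basic_action TG r TX sX act"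
  shows "closedin (prod_topology TX TX)
           {(x1, x2). x1 \<in> topspace TX \<and> x2 \<in> topspace TX \<and>
              orbit TG r sX act x1 = orbit TG r sX act x2}
         \<longleftrightarrow> Hausdorff_space (orbit_space TG r TX sX act)"
proof (rule open_quotient_Hausdorff)
  show "topspace (orbit_space TG r TX sX act) = orbit TG r sX act ` topspace TX"
    by (rule topspace_orbit_space)
  show "openin (orbit_space TG r TX sX act) V \<longleftrightarrow> V \<subseteq> topspace (orbit_space TG r TX sX act) \<and>
      openin TX {x \<in> topspace TX. orbit TG r sX act x \<in> V}" for V
    by (simp add: openin_orbit_space topspace_orbit_space)
  show "openin (orbit_space TG r TX sX act) (orbit TG r sX act ` U)" if "openin TX U" for U
    unfolding openin_orbit_space
    using orbit_open_map[OF assms(1,2) that] openin_subset[OF that] by blast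
qed

end
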